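(* Let ${\bf S}$ be any logic over $For$ (a consequence relation $\vdash_{\bf S}$) lying between ${\bf Km}$ and ${\bf T45m}$, i.e. $\Gamma\vdash_{\bf Km}\alpha$ implies $\Gamma\vdash_{\bf S}\alpha$, and $\Gamma\vdash_{\bf S}\alpha$ implies $\Gamma\vdash_{\bf T45m}\alpha$, for all $\Gamma\cup\{\alpha\}\subseteq For$. Then ${\bf S}$ cannot be characterized by a single finite deterministic logical matrix; that is, there is no logical matrix $\mathcal M=\langle M,D\rangle$ with $M$ finite such that, for all $\Gamma\cup\{\alpha\}\subseteq For$, $\Gamma\vdash_{\bf S}\alpha$ iff $\Gamma\vDash_{\mathcal M}\alpha$.
   Context: Formulas are built from a denumerable set of propositional variables by the unary connectives $\neg$, $\Box$ and the binary connective $\to$; $For$ is the set of all formulas. Abbreviations: $\Diamond\alpha:=\neg\Box\neg\alpha$, $\alpha\vee\beta:=\neg\alpha\to\beta$, $\alpha\wedge\beta:=\neg(\alpha\to\neg\beta)$. All Hilbert calculi below have as axioms all instances (over $For$) of the axiom schemas of a standard Hilbert calculus for classical propositional logic in the signature $\{\neg,\to\}$, plus the listed modal schemas, with modus ponens as the only rule; $\Gamma\vdash_{\bf L}\alpha$ means there is a derivation of $\alpha$ from $\Gamma$ in ${\bf L}$. ${\bf Km}$: (K') $\Diamond\alpha\to(\Box(\alpha\to\beta)\to(\Box\alpha\to\Box\beta))$; (K1') $\Diamond\neg\beta\to(\Box(\alpha\to\beta)\to(\Diamond\alpha\to\Diamond\beta))$; (K2') $\Diamond\alpha\to(\Diamond(\alpha\to\beta)\to(\Box\alpha\to\Diamond\beta))$;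 (M3') $(\Diamond\alpha\vee\Diamond\neg\alpha)\to(\Diamond\beta\to\Diamond(\alpha\to\beta))$; (M4') $\Diamond\neg\beta\to(\Diamond\neg\alpha\to\Diamond(\alpha\to\beta))$; (I1) $(\Box\alpha\wedge\Box\neg\alpha)\to(\Box(\alpha\to\beta)\wedge\Box\neg(\alpha\to\beta))$; (I2) $(\Box\beta\wedge\Box\neg\beta)\to(\Box(\alpha\to\beta)\wedge\Box\neg(\alpha\to\beta))$; (M1) $\neg\Diamond\alpha\to\Box(\alpha\to\beta)$; (M2) $\Box\beta\to\Box(\alpha\to\beta)$; (DN1) $\Box\alpha\to\Box\neg\neg\alpha$; (DN2) $\Box\neg\neg\alpha\to\Box\alpha$. ${\bf T45m}$: (K) $\Box(\alpha\to\beta)\to(\Box\alpha\to\Box\beta)$; (K1) $\Box(\alpha\to\beta)\to(\Diamond\alpha\to\Diamond\beta)$; (K2) $\Diamond(\alpha\to\beta)\to(\Box\alpha\to\Diamond\beta)$; (M1); (M2); (M3) $\Diamond\beta\to\Diamond(\alpha\to\beta)$; (M4) $\Diamond\neg\alpha\to\Diamond(\alpha\to\beta)$; (T) $\Box\alpha\to\alpha$; (DN1); (DN2); (4) $\Box\alpha\to\Box\Box\alpha$; (5) $\Diamond\Box\alpha\to\Box\alpha$. A (deterministic) logical matrix $\mathcal M=\langle M,D\rangle$ consists of a set $M$ with unary operations for $\neg,\Box$ and a binary operation for $\to$, and $D\subseteq M$; valuations are homomorphisms $h:For\to M$, and $\Gamma\vDash_{\mathcal M}\alpha$ iff every valuation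 mapping $\Gamma$ into $D$ maps $\alpha$ into $D$. *)

theory Defs
  imports Main
begin

datatype fm = Var nat | Neg fm | Box fm | Imp fm fm

definition Dia :: "fm \<Rightarrow> fm" where "Dia a = Neg (Box (Neg a))"
definition Or :: "fm \<Rightarrow> fm \<Rightarrow> fm" where "Or a b = Imp (Neg a) b"
definition And :: "fm \<Rightarrow> fm \<Rightarrow> fm" where "And a b = Neg (Imp a (Neg b))"

text \<open>Classical propositional axioms (Lukasiewicz's complete system in signature neg, imp).\<close>
definition CPC_ax :: "fm \<Rightarrow> bool" where
  "CPC_ax f \<longleftrightarrow>
     (\<exists>a b. f = Imp a (Imp b a)) \<or>
     (\<exists>a b c. f = Imp (Imp a (Imp b c)) (Imp (Imp a b) (Imp a c))) \<or>
     (\<exists>a b. f = Imp (Imp (Neg a) (Neg b)) (Imp b a))"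

definition Km_ax :: "fm \<Rightarrow> bool" where
  "Km_ax f \<longleftrightarrow> CPC_ax f \<or>
     (\<exists>a b. f = Imp (Dia a) (Imp (Box (Imp a b)) (Imp (Box a) (Box b)))) \<or>
     (\<exists>a b. f = Imp (Dia (Neg b)) (Imp (Box (Imp a b)) (Imp (Dia a) (Dia b)))) \<or>
     (\<exists>a b. f = Imp (Dia a) (Imp (Dia (Imp a b)) (Imp (Box a) (Dia b)))) \<or>
     (\<exists>a b. f = Imp (Or (Dia a) (Dia (Neg a))) (Imp (Dia b) (Dia (Imp a b)))) \<or>
     (\<exists>a b. f = Imp (Dia (Neg b)) (Imp (Dia (Neg a)) (Dia (Imp a b)))) \<or>
     (\<exists>a b. f = Imp (And (Box a) (Box (Neg a))) (And (Box (Imp a b)) (Box (Neg (Imp a b))))) \<or>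
     (\<exists>a b. f = Imp (And (Box b) (Box (Neg b))) (And (Box (Imp a b)) (Box (Neg (Imp a b))))) \<or>
     (\<exists>a b. f = Imp (Neg (Dia a)) (Box (Imp a b))) \<or>
     (\<exists>a b. f = Imp (Box b) (Box (Imp a b))) \<or>
     (\<exists>a. f = Imp (Box a) (Box (Neg (Neg a)))) \<or>
     (\<exists>a. f = Imp (Box (Neg (Neg a))) (Box a))"

definition T45m_ax :: "fm \<Rightarrow> bool" where
  "T45m_ax f \<longleftrightarrow> CPC_ax f \<or>
     (\<exists>a b. f = Imp (Box (Imp a b)) (Imp (Box a) (Box b))) \<or>
     (\<exists>a b. f = Imp (Box (Imp a b)) (Imp (Dia a) (Dia b))) \<or>
     (\<exists>a b. f = Imp (Dia (Imp a b)) (Imp (Box a) (Dia b))) \<or>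
     (\<exists>a b. f = Imp (Neg (Dia a)) (Box (Imp a b))) \<or>
     (\<exists>a b. f = Imp (Box b) (Box (Imp a b))) \<or>
     (\<exists>a b. f = Imp (Dia b) (Dia (Imp a b))) \<or>
     (\<exists>a b. f = Imp (Dia (Neg a)) (Dia (Imp a b))) \<or>
     (\<exists>a. f = Imp (Box a) a) \<or>
     (\<exists>a. f = Imp (Box a) (Box (Neg (Neg a)))) \<or>
     (\<exists>a. f = Imp (Box (Neg (Neg a))) (Box a)) \<or>
     (\<exists>a. f = Imp (Box a) (Box (Box a))) \<or>
     (\<exists>a. f = Imp (Dia (Box a)) (Box a))"

inductive derivable :: "(fm \<Rightarrow> bool) \<Rightarrow> fm set \<Rightarrow> fm \<Rightarrow> bool" for Ax where
  prem: "a \<in> G \<Longrightarrow> derivable Ax G a"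
| ax: "Ax a \<Longrightarrow> derivable Ax G a"
| mp: "derivable Ax G a \<Longrightarrow> derivable Ax G (Imp a b) \<Longrightarrow> derivable Ax G b"

definition consequence_relation :: "(fm set \<Rightarrow> fm \<Rightarrow> bool) \<Rightarrow> bool" where
  "consequence_relation S \<longleftrightarrow>
     (\<forall>G a. a \<in> G \<longrightarrow> S G a) \<and>
     (\<forall>G H a. S G a \<and> G \<subseteq> H \<longrightarrow> S H a) \<and>
     (\<forall>G H a. (\<forall>b\<in>H. S G b) \<and> S (G \<union> H) a \<longrightarrow> S G a)"

fun eval :: "('a \<Rightarrow> 'a) \<Rightarrow> ('a \<Rightarrow> 'a) \<Rightarrow> ('a \<Rightarrow> 'a \<Rightarrow> 'a) \<Rightarrow> (nat \<Rightarrow> 'a) \<Rightarrow> fm \<Rightarrow> 'a" where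
  "eval ng bx im v (Var n) = v n"
| "eval ng bx im v (Neg a) = ng (eval ng bx im v a)"
| "eval ng bx im v (Box a) = bx (eval ng bx im v a)"
| "eval ng bx im v (Imp a b) = im (eval ng bx im v a) (eval ng bx im v b)"

definition is_matrix :: "'a set \<Rightarrow> 'a set \<Rightarrow> ('a \<Rightarrow> 'a) \<Rightarrow> ('a \<Rightarrow> 'a) \<Rightarrow> ('a \<Rightarrow> 'a \<Rightarrow> 'a) \<Rightarrow> bool" where
  "is_matrix M D ng bx im \<longleftrightarrow> D \<subseteq> M \<and> (\<forall>x\<in>M. ng x \<in> M) \<and> (\<forall>x\<in>M. bx x \<in> M)
     \<and> (\<forall>x\<in>M. \<forall>y\<in>M. im x y \<in> M)"

definition matrix_conseq :: "'a set \<Rightarrow> 'a set \<Rightarrow> ('a \<Rightarrow> 'a) \<Rightarrow> ('a \<Rightarrow> 'a) \<Rightarrow> ('a \<Rightarrow> 'a \<Rightarrow> 'a)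
    \<Rightarrow> fm set \<Rightarrow> fm \<Rightarrow> bool" where
  "matrix_conseq M D ng bx im G a \<longleftrightarrow>
     (\<forall>v. (\<forall>n. v n \<in> M) \<longrightarrow> (\<forall>g\<in>G. eval ng bx im v g \<in> D) \<longrightarrow> eval ng bx im v a \<in> D)"

end

theory Submission
  imports Defs
begin

datatype val = TP | TM | FM | FP

fun negv :: "val \<Rightarrow> val" where
  "negv TP = FP" | "negv TM = FM" | "negv FM = TM" | "negv FP = TP"

fun boxv :: "val \<Rightarrow> val" where
  "boxv TP = TP" | "boxv _ = FP"

fun impv :: "bool \<Rightarrow> val \<Rightarrow> val \<Rightarrow> val" where
  "impv c FP y = TP"
| "impv c x TP = TP"
| "impv c TP FP = FP"
| "impv c TP TM = TM"
| "impv c TP FM = FM"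
| "impv c TM TM = (if c then TP else TM)"
| "impv c TM FM = FM"
| "impv c TM FP = FM"
| "impv c FM TM = (if c then TP else TM)"
| "impv c FM FM = (if c then TP else TM)"
| "impv c FM FP = TM"

primrec vv :: "fm \<Rightarrow> val" where
  "vv (Var n) = TM"
| "vv (Neg a) = negv (vv a)"
| "vv (Box a) = boxv (vv a)"
| "vv (Imp a b) = impv (a = b) (vv a) (vv b)"

definition des :: "val \<Rightarrow> bool" where "des x \<longleftrightarrow> x = TP \<or> x = TM"

lemma des_imp: "des (impv c x y) \<longleftrightarrow> (\<not> des x \<or> des y)"
  by (cases c; cases x; cases y) (auto simp: des_def)

lemma ax_sound: "T45m_ax f \<Longrightarrow> des (vv f)"
  unfolding T45m_ax_def CPC_ax_def Dia_def
  apply (elim disjE exE)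
  apply (simp_all only: vv.simps des_imp)
  apply (simp_all add: des_def)
  apply (auto split: if_splits)
  apply (case_tac "vv a"; case_tac "vv b"; auto split: if_splits)+
  done

lemma sound: "derivable T45m_ax G a \<Longrightarrow> (\<forall>g\<in>G. des (vv g)) \<Longrightarrow> des (vv a)"
proof (induction rule: derivable.induct)
  case (prem a G) then show ?case by auto
next
  case (ax a G) then show ?case using ax_sound by blast
next
  case (mp G a b) then show ?case by (auto simp: des_imp)
qed

lemma km_id: "derivable Km_ax G (Imp X X)"
proof -
  have a2: "derivable Km_ax G (Imp (Imp X (Imp (Imp X X) X)) (Imp (Imp X (Imp X X)) (Imp X X)))"
    by (rule derivable.ax) (auto simp: Km_ax_def CPC_ax_def)
  have a1: "derivable Km_ax G (Imp X (Imp (Imp X X) X))"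
    by (rule derivable.ax) (auto simp: Km_ax_def CPC_ax_def)
  have a1b: "derivable Km_ax G (Imp X (Imp X X))"
    by (rule derivable.ax) (auto simp: Km_ax_def CPC_ax_def)
  show ?thesis using derivable.mp[OF a1b derivable.mp[OF a1 a2]] .
qed

lemma km_efq: "derivable Km_ax {B, Neg B} C"
proof -
  have nb: "derivable Km_ax {B, Neg B} (Neg B)" by (rule derivable.prem) auto
  have b: "derivable Km_ax {B, Neg B} B" by (rule derivable.prem) auto
  have a1: "derivable Km_ax {B, Neg B} (Imp (Neg B) (Imp (Neg C) (Neg B)))"
    by (rule derivable.ax) (auto simp: Km_ax_def CPC_ax_def)
  have a3: "derivable Km_ax {B, Neg B} (Imp (Imp (Neg C) (Neg B)) (Imp B C))"
    by (rule derivable.ax) (auto simp: Km_ax_def CPC_ax_def)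
  show ?thesis using derivable.mp[OF b derivable.mp[OF derivable.mp[OF nb a1] a3]] .
qed

definition chi :: "nat \<Rightarrow> nat \<Rightarrow> fm" where
  "chi i j = Imp (Box (Imp (Var i) (Var i))) (Box (Imp (Var i) (Var j)))"

lemma vv_chi: "i \<noteq> j \<Longrightarrow> des (vv (Neg (chi i j)))"
  by (simp add: chi_def des_def)

theorem mainTheorem4:
  fixes S :: "fm set \<Rightarrow> fm \<Rightarrow> bool"
  assumes "consequence_relation S"
    and "\<forall>G a. derivable Km_ax G a \<longrightarrow> S G a"
    and "\<forall>G a. S G a \<longrightarrow> derivable T45m_ax G a"
  shows "\<not> (\<exists>(M :: 'a set) D ng bx im. finite M \<and> is_matrix M D ng bx im \<and>
            (\<forall>G a. S G a \<longleftrightarrow> matrix_conseq M D ng bx im G a))"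
proof
  assume "\<exists>(M :: 'a set) D ng bx im. finite M \<and> is_matrix M D ng bx im \<and>
            (\<forall>G a. S G a \<longleftrightarrow> matrix_conseq M D ng bx im G a)"
  then obtain M :: "'a set" and D ng bx im where fin: "finite M"
    and ch: "\<forall>G a. S G a \<longleftrightarrow> matrix_conseq M D ng bx im G a" by blast
  define N where "N = card M"
  define Gam where "Gam = {Neg (chi i j) | i j. i < j \<and> j \<le> N}"
  define al where "al = Box (Var 0)"
  have mc: "matrix_conseq M D ng bx im Gam al"
    unfolding matrix_conseq_def
  proof (intro allI impI)
    fix h assume hM: "\<forall>n. h n \<in> M" and hG: "\<forall>g\<in>Gam. eval ng bx im h g \<in> D"
    have "\<not> inj_on h {0..N}"
    proof
      assume "inj_on h {0..N}"
      moreover have "h ` {0..N} \<subseteq> M" using hM by auto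
      ultimately have "card {0..N} \<le> card M" using fin by (rule card_inj_on_le)
      then show False by (simp add: N_def)
    qed
    then obtain i j where ij: "i \<le> N" "j \<le> N" "i \<noteq> j" "h i = h j"
      unfolding inj_on_def by auto
    then obtain i' j' where ij': "i' < j'" "j' \<le> N" "h i' = h j'"
      by (metis linorder_neqE_nat)
    have "Neg (chi i' j') \<in> Gam" using ij' by (auto simp: Gam_def)
    then have d1: "eval ng bx im h (Neg (chi i' i')) \<in> D"
      using hG ij' by (auto simp: chi_def)
    have "S {} (chi i' i')" using assms(2) km_id by (simp add: chi_def)
    then have d2: "eval ng bx im h (chi i' i') \<in> D"
      using ch hM by (auto simp: matrix_conseq_def)
    have "S {chi i' i', Neg (chi i' i')} al" using assms(2) km_efq by blast
    then show "eval ng bx im h al \<in> D"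
      using ch hM d1 d2 by (auto simp: matrix_conseq_def)
  qed
  then have "derivable T45m_ax Gam al" using ch assms(3) by blast
  moreover have "\<forall>g\<in>Gam. des (vv g)" using vv_chi by (auto simp: Gam_def)
  ultimately have "des (vv al)" by (rule sound)
  then show False by (simp add: al_def des_def)
qed

end
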